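(* Let $\Psi=\begin{bmatrix}\Psi_{11}&\Psi_{12}\\ \Psi_{12}^\top&\Psi_{22}\end{bmatrix}\in\mathbb{R}^{(p+q)\times(p+q)}$ be symmetric with $\Psi_{11}\in\mathbb{R}^{p\times p}$, such that $\Psi_{11}-\Psi_{12}\Psi_{22}^{-1}\Psi_{12}^\top>0$ and $\Psi_{22}<0$. Let $W\in\mathbb{R}^{p\times r}$ be a full rank matrix with $r\le p$. Suppose $Z_W\in\mathbb{R}^{r\times q}$ satisfies $$\begin{bmatrix}I\\Z_W^\top\end{bmatrix}^\top\begin{bmatrix}W^\top\Psi_{11}W&W^\top\Psi_{12}\\ \Psi_{12}^\top W&\Psi_{22}\end{bmatrix}\begin{bmatrix}I\\Z_W^\top\end{bmatrix}\ge0.$$ Then there exists $Z\in\mathbb{R}^{p\times q}$ such that $Z^\top W=Z_W^\top$ and $$\begin{bmatrix}I\\Z^\top\end{bmatrix}^\top\Psi\begin{bmatrix}I\\Z^\top\end{bmatrix}\ge0.$$ *)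

theory Defs
  imports "HOL-Analysis.Analysis"
begin

text \<open>Block matrices over index types 'a + 'b (block row index) and 'c + 'd (block column index).\<close>

definition blk11 :: "real^('c::finite+'d::finite)^('a::finite+'b::finite) \<Rightarrow> real^'c^'a" where
  "blk11 M = (\<chi> i j. M $ Inl i $ Inl j)"
definition blk12 :: "real^('c::finite+'d::finite)^('a::finite+'b::finite) \<Rightarrow> real^'d^'a" where
  "blk12 M = (\<chi> i j. M $ Inl i $ Inr j)"
definition blk21 :: "real^('c::finite+'d::finite)^('a::finite+'b::finite) \<Rightarrow> real^'c^'b" where
  "blk21 M = (\<chi> i j. M $ Inr i $ Inl j)"
definition blk22 :: "real^('c::finite+'d::finite)^('a::finite+'b::finite) \<Rightarrow> real^'d^'b" where
  "blk22 M = (\<chi> i j. M $ Inr i $ Inr j)"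

definition block :: "real^'c::finite^'a::finite \<Rightarrow> real^'d::finite^'a \<Rightarrow> real^'c^'b::finite \<Rightarrow> real^'d^'b \<Rightarrow> real^('c+'d)^('a+'b)" where
  "block A B C D = (\<chi> i j. case i of
      Inl i' \<Rightarrow> (case j of Inl j' \<Rightarrow> A $ i' $ j' | Inr j' \<Rightarrow> B $ i' $ j')
    | Inr i' \<Rightarrow> (case j of Inl j' \<Rightarrow> C $ i' $ j' | Inr j' \<Rightarrow> D $ i' $ j'))"

text \<open>Vertical stacking [A; B].\<close>
definition stack :: "real^'c::finite^'a::finite \<Rightarrow> real^'c^'b::finite \<Rightarrow> real^'c^('a+'b)" where
  "stack A B = (\<chi> i. case i of Inl i' \<Rightarrow> A $ i' | Inr i' \<Rightarrow> B $ i')"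

text \<open>Loewner order relative to zero (for the symmetric matrices occurring in the statement).\<close>
definition psd :: "real^'n::finite^'n \<Rightarrow> bool" where
  "psd A \<longleftrightarrow> (\<forall>x. 0 \<le> x \<bullet> (A *v x))"
definition pos_def :: "real^'n::finite^'n \<Rightarrow> bool" where
  "pos_def A \<longleftrightarrow> (\<forall>x. x \<noteq> 0 \<longrightarrow> 0 < x \<bullet> (A *v x))"
definition neg_def :: "real^'n::finite^'n \<Rightarrow> bool" where
  "neg_def A \<longleftrightarrow> (\<forall>x. x \<noteq> 0 \<longrightarrow> x \<bullet> (A *v x) < 0)"

end

theory Submission
  imports Defs
begin

definition vjoin :: "real^'a::finite \<Rightarrow> real^'b::finite \<Rightarrow> real^('a+'b)" where
  "vjoin x y = (\<chi> i. case i of Inl a \<Rightarrow> x$a | Inr b \<Rightarrow> y$b)"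

lemma sum_UNIV_Plus: "sum (f :: ('a::finite+'b::finite) \<Rightarrow> real) UNIV = sum (\<lambda>a. f (Inl a)) UNIV + sum (\<lambda>b. f (Inr b)) UNIV"
proof -
  have "sum f UNIV = sum f (UNIV <+> UNIV)" by simp
  also have "\<dots> = sum (f \<circ> Inl) UNIV + sum (f \<circ> Inr) UNIV" by (rule sum.Plus) auto
  finally show ?thesis by (simp add: comp_def)
qed

lemma inner_vjoin: "vjoin a b \<bullet> vjoin c d = a \<bullet> c + b \<bullet> d"
  by (simp add: inner_vec_def vjoin_def sum_UNIV_Plus)

lemma mult_vjoin: "(M :: real^('c::finite+'d::finite)^('a::finite+'b::finite)) *v vjoin x y
   = vjoin (blk11 M *v x + blk12 M *v y) (blk21 M *v x + blk22 M *v y)"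
  by (auto simp: vec_eq_iff matrix_vector_mult_def vjoin_def sum_UNIV_Plus blk11_def blk12_def blk21_def blk22_def split: sum.splits)

lemma stack_mult: "stack P Q *v x = vjoin (P *v x) (Q *v x)"
  by (auto simp: vec_eq_iff matrix_vector_mult_def vjoin_def stack_def split: sum.splits)

lemma blk_block: "blk11 (block A B C D) = A" "blk12 (block A B C D) = B"
  "blk21 (block A B C D) = C" "blk22 (block A B C D) = D"
  by (auto simp: vec_eq_iff block_def blk11_def blk12_def blk21_def blk22_def)

lemma adj: "(x::real^'m::finite) \<bullet> (A *v y) = (transpose A *v x) \<bullet> y"
  by (simp add: dot_lmul_matrix)

lemma adjT: "(x::real^'m::finite) \<bullet> (transpose X *v y) = (X *v x) \<bullet> y"
  using adj[of x "transpose X" y] by (simp only: transpose_transpose)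

lemma quad_tr: "(x::real^'n::finite) \<bullet> ((transpose X ** M ** X) *v x) = (X *v x) \<bullet> (M *v (X *v x))"
  by (simp only: matrix_vector_mul_assoc[symmetric] adjT)

lemma blk_transpose: "blk21 (transpose M) = transpose (blk12 M)" "blk11 (transpose M) = transpose (blk11 M)"
   "blk22 (transpose M) = transpose (blk22 M)"
  by (auto simp: vec_eq_iff transpose_def blk11_def blk12_def blk21_def blk22_def)

lemma transpose_diff: "transpose (A - B :: real^'n::finite^'m::finite) = transpose A - transpose B"
  by (simp add: transpose_def vec_eq_iff)

lemma quad_block:
  assumes "blk21 M = transpose (blk12 M)"
  shows "vjoin a b \<bullet> (M *v vjoin a b) = a \<bullet> (blk11 M *v a) + 2 * (a \<bullet> (blk12 M *v b)) + b \<bullet> (blk22 M *v b)"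
proof -
  have "b \<bullet> (blk21 M *v a) = a \<bullet> (blk12 M *v b)"
    using assms adjT[of b "blk12 M" a] by (simp del: transpose_matrix_vector add: inner_commute)
  then show ?thesis by (simp add: mult_vjoin inner_vjoin inner_add_right del: transpose_matrix_vector)
qed

lemma inv_props: assumes "invertible (A::real^'n::finite^'n)"
  shows "A ** matrix_inv A = mat 1" "matrix_inv A ** A = mat 1"
proof -
  have "\<exists>A'. A ** A' = mat 1 \<and> A' ** A = mat 1" using assms by (simp add: invertible_def)
  then have "A ** matrix_inv A = mat 1 \<and> matrix_inv A ** A = mat 1"
    unfolding matrix_inv_def by (rule someI_ex)
  then show "A ** matrix_inv A = mat 1" "matrix_inv A ** A = mat 1" by auto
qed

lemma inj_invertible: assumes "\<And>x. (A::real^'n::finite^'n) *v x = 0 \<Longrightarrow> x = 0"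
  shows "invertible A"
  using assms matrix_left_invertible_ker invertible_left_inverse by blast

theorem lemmaA4:
  fixes Psi :: "real^('p::finite + 'q::finite)^('p + 'q)"
    and W :: "real^'r::finite^'p"
    and ZW :: "real^'q^'r"
  assumes sym: "transpose Psi = Psi"
    and schur: "pos_def (blk11 Psi - blk12 Psi ** matrix_inv (blk22 Psi) ** transpose (blk12 Psi))"
    and neg: "neg_def (blk22 Psi)"
    and rk: "rank W = CARD('r)"
    and rp: "CARD('r) \<le> CARD('p)"
    and ZW_ok: "psd (transpose (stack (mat 1) (transpose ZW))
                   ** block (transpose W ** blk11 Psi ** W) (transpose W ** blk12 Psi)
                            (transpose (blk12 Psi) ** W) (blk22 Psi)
                   ** stack (mat 1) (transpose ZW))"
  shows "\<exists>Z :: real^'q^'p. transpose Z ** W = transpose ZW \<and>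
           psd (transpose (stack (mat 1) (transpose Z)) ** Psi ** stack (mat 1) (transpose Z))"
proof -
  define A where "A = blk11 Psi"
  define B where "B = blk12 Psi"
  define D where "D = blk22 Psi"
  define Di where "Di = matrix_inv D"
  define S where "S = A - B ** Di ** transpose B"
  have hC: "blk21 Psi = transpose B"
    using blk_transpose(1)[of Psi] sym by (simp add: B_def)
  have hD: "transpose D = D"
    using blk_transpose(3)[of Psi] sym by (simp add: D_def)
  have hA: "transpose A = A"
    using blk_transpose(2)[of Psi] sym by (simp add: A_def)
  have Dinv: "invertible D"
  proof (rule inj_invertible)
    fix x assume "D *v x = 0"
    then show "x = 0" using neg unfolding neg_def_def D_def by force
  qed
  have DDi: "D ** Di = mat 1" and DiD: "Di ** D = mat 1"
    using inv_props[OF Dinv] by (auto simp: Di_def)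
  have hDi: "transpose Di = Di"
  proof -
    have "transpose D ** transpose Di = mat 1"
      using DiD by (metis matrix_transpose_mul transpose_mat)
    then have "D ** transpose Di = mat 1" using hD by simp
    then have "Di ** (D ** transpose Di) = Di" by simp
    then show ?thesis by (simp add: matrix_mul_assoc DiD)
  qed
  have hS: "transpose S = S"
    unfolding S_def by (simp add: transpose_diff matrix_transpose_mul hA hDi matrix_mul_assoc)
  have Spd: "\<And>x. x \<noteq> 0 \<Longrightarrow> 0 < x \<bullet> (S *v x)"
    using schur unfolding pos_def_def S_def A_def B_def Di_def D_def by blast
  have Spsd: "0 \<le> x \<bullet> (S *v x)" for x
    using Spd[of x] by (cases "x = 0") auto
  define Q where "Q a b = a \<bullet> (A *v a) + 2 * (a \<bullet> (B *v b)) + b \<bullet> (D *v b)" for a b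
  have compl: "Q a b = a \<bullet> (S *v a) + (b + Di *v (transpose B *v a)) \<bullet> (D *v (b + Di *v (transpose B *v a)))" for a b
  proof -
    define c where "c = Di *v (transpose B *v a)"
    have Dc: "D *v c = transpose B *v a"
      by (simp only: c_def matrix_vector_mul_assoc[of D Di] DDi matrix_vector_mul_lid)
    have e1: "b \<bullet> (D *v c) = a \<bullet> (B *v b)"
      using adjT[of b B a] by (simp only: Dc inner_commute)
    have e2: "c \<bullet> (D *v b) = a \<bullet> (B *v b)"
      using adj[of c D b] e1 by (simp only: hD inner_commute)
    have e3: "c \<bullet> (D *v c) = a \<bullet> (B *v c)"
      using adjT[of c B a] by (simp only: Dc inner_commute)
    have e4: "a \<bullet> (S *v a) = a \<bullet> (A *v a) - a \<bullet> (B *v c)"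
      by (simp only: S_def c_def matrix_vector_mult_diff_rdistrib inner_diff_right matrix_vector_mul_assoc matrix_mul_assoc)
    have "(b + c) \<bullet> (D *v (b + c)) = b \<bullet> (D *v b) + b \<bullet> (D *v c) + c \<bullet> (D *v b) + c \<bullet> (D *v c)"
      by (simp only: matrix_vector_right_distrib inner_add_left inner_add_right add.assoc)
    then show ?thesis unfolding Q_def c_def[symmetric] using e1 e2 e3 e4 by linarith
  qed
  have injW: "inj ((*v) W)" using rk full_rank_injective by blast
  define G where "G = transpose W ** S ** W"
  have Ginv: "invertible G"
  proof (rule inj_invertible)
    fix u assume "G *v u = 0"
    then have "(W *v u) \<bullet> (S *v (W *v u)) = 0"
      using quad_tr[of u W S] by (simp add: G_def del: transpose_matrix_vector)
    then have "W *v u = 0" using Spd by force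
    then show "u = 0" using injW by (metis inj_eq matrix_vector_mult_0_right)
  qed
  define Gi where "Gi = matrix_inv G"
  have GGi: "G ** Gi = mat 1" and GiG: "Gi ** G = mat 1"
    using inv_props[OF Ginv] by (auto simp: Gi_def)
  define YW where "YW = transpose ZW + Di ** transpose B ** W"
  define Zt where "Zt = YW ** Gi ** transpose W ** S - Di ** transpose B"
  have hyp: "0 \<le> Q (W *v u) (transpose ZW *v u)" for u
  proof -
    define g where "g = transpose ZW *v u"
    define Blk where "Blk = block (transpose W ** A ** W) (transpose W ** B) (transpose B ** W) D"
    have "0 \<le> u \<bullet> ((transpose (stack (mat 1) (transpose ZW)) ** Blk ** stack (mat 1) (transpose ZW)) *v u)"
      using ZW_ok unfolding psd_def Blk_def A_def B_def D_def by blast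
    also have "\<dots> = vjoin u g \<bullet> (Blk *v vjoin u g)"
      by (simp only: quad_tr stack_mult matrix_vector_mul_lid g_def)
    also have "\<dots> = u \<bullet> ((transpose W ** A ** W) *v u) + 2 * (u \<bullet> ((transpose W ** B) *v g)) + g \<bullet> (D *v g)"
    proof -
      have "blk21 Blk = transpose (blk12 Blk)" by (simp add: Blk_def blk_block matrix_transpose_mul)
      from quad_block[OF this, of u g] show ?thesis by (simp only: Blk_def blk_block)
    qed
    also have "\<dots> = Q (W *v u) g"
      unfolding Q_def by (simp only: quad_tr adjT matrix_vector_mul_assoc[symmetric])
    finally show ?thesis by (simp add: g_def)
  qed
  have goal: "0 \<le> Q x (Zt *v x)" for x
  proof -
    define u where "u = Gi *v (transpose W *v (S *v x))"
    have h1: "Zt *v x + Di *v (transpose B *v x) = YW *v u"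
      by (simp only: Zt_def u_def matrix_vector_mult_diff_rdistrib matrix_vector_mul_assoc matrix_mul_assoc diff_add_cancel)
    have h2: "YW *v u = transpose ZW *v u + Di *v (transpose B *v (W *v u))"
      by (simp only: YW_def matrix_vector_mult_add_rdistrib matrix_vector_mul_assoc matrix_mul_assoc)
    have q1: "Q x (Zt *v x) = x \<bullet> (S *v x) + (YW *v u) \<bullet> (D *v (YW *v u))"
      using compl[of x "Zt *v x"] h1 by simp
    have q2: "Q (W *v u) (transpose ZW *v u) = (W *v u) \<bullet> (S *v (W *v u)) + (YW *v u) \<bullet> (D *v (YW *v u))"
      using compl[of "W *v u" "transpose ZW *v u"] h2 by simp
    define e where "e = x - W *v u"
    have h3: "transpose W *v (S *v e) = 0"
    proof -
      have "transpose W *v (S *v (W *v u)) = (G ** Gi) *v (transpose W *v (S *v x))"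
        by (simp only: G_def u_def matrix_vector_mul_assoc matrix_mul_assoc)
      then have "transpose W *v (S *v (W *v u)) = transpose W *v (S *v x)"
        by (simp only: GGi matrix_vector_mul_lid)
      then show ?thesis by (simp only: e_def matrix_vector_mult_diff_distrib diff_self)
    qed
    have h4: "(W *v u) \<bullet> (S *v e) = 0"
      using adjT[of u W "S *v e"] h3 by simp
    have h5: "e \<bullet> (S *v (W *v u)) = 0"
      using adj[of e S "W *v u"] h4 by (simp only: hS inner_commute)
    have xe: "x = e + W *v u" by (simp add: e_def)
    have "x \<bullet> (S *v x) = e \<bullet> (S *v e) + e \<bullet> (S *v (W *v u)) + (W *v u) \<bullet> (S *v e) + (W *v u) \<bullet> (S *v (W *v u))"
      by (subst (1 2) xe, simp only: matrix_vector_right_distrib inner_add_left inner_add_right add.assoc)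
    then have "x \<bullet> (S *v x) \<ge> (W *v u) \<bullet> (S *v (W *v u))"
      using h4 h5 Spsd[of e] by linarith
    then show ?thesis using q1 q2 hyp[of u] by linarith
  qed
  show ?thesis
  proof (intro exI conjI)
    show "transpose (transpose Zt) ** W = transpose ZW"
    proof (simp only: transpose_transpose matrix_eq, intro allI)
      fix u
      have "Gi *v (transpose W *v (S *v (W *v u))) = u"
        by (simp only: matrix_vector_mul_assoc matrix_mul_assoc G_def[symmetric] GiG matrix_vector_mul_lid)
      then have "Zt *v (W *v u) = YW *v u - Di *v (transpose B *v (W *v u))"
        by (simp only: Zt_def matrix_vector_mult_diff_rdistrib matrix_vector_mul_assoc[symmetric])
      also have "\<dots> = transpose ZW *v u"
        by (simp only: YW_def matrix_vector_mult_add_rdistrib matrix_vector_mul_assoc[symmetric] add_diff_cancel)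
      finally show "(Zt ** W) *v u = transpose ZW *v u" by (simp only: matrix_vector_mul_assoc)
    qed
    show "psd (transpose (stack (mat 1) (transpose (transpose Zt))) ** Psi ** stack (mat 1) (transpose (transpose Zt)))"
      unfolding psd_def
    proof
      fix x :: "real^'p"
      have "x \<bullet> ((transpose (stack (mat 1) (transpose (transpose Zt))) ** Psi ** stack (mat 1) (transpose (transpose Zt))) *v x)
         = vjoin x (Zt *v x) \<bullet> (Psi *v vjoin x (Zt *v x))"
        by (simp only: quad_tr stack_mult matrix_vector_mul_lid transpose_transpose)
      also have "\<dots> = Q x (Zt *v x)"
        unfolding Q_def A_def B_def D_def by (rule quad_block) (simp add: hC B_def)
      finally show "0 \<le> x \<bullet> ((transpose (stack (mat 1) (transpose (transpose Zt))) ** Psi ** stack (mat 1) (transpose (transpose Zt))) *v x)"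
        using goal[of x] by simp
    qed
  qed
qed

end
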